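(* Let $A$ be a Lagrange tensor along $c$ with base point $t_0$ and $W\subset E_{t_0}$ a $p$-dimensional subspace. At every regular point $t$, with $g=g_W$, $$p\,\frac{g''}{g}=\frac1p(\operatorname{tr}S_1)^2-\operatorname{tr}(S_1^2)-3\operatorname{tr}(S_2^TS_2)-\sum_{i=1}^p\langle R_tw_i,w_i\rangle,$$ where $W_t=A_t^{-*}W\subset E_t$, $w_1,\dots,w_p$ is an orthonormal basis of $W_t$, and $S_1:W_t\to W_t$, $S_2:W_t\to W_t^\perp$ are defined by $S_tw=S_1w+S_2w$ for $w\in W_t$ (orthogonal projections of $S_tw$ to $W_t$ and $W_t^\perp$).
   Context: Setting: $(M^{n+1},g)$ is a Riemannian manifold and $c:I\to M$ a unit-speed geodesic. $E_t=\dot c(t)^\perp\subset T_{c(t)}M$, $R_t(x)=R(x,\dot c)\dot c$ on $E_t$, and $'$ is $\nabla_{\dot c}$. A Lagrange tensor with base point $t_0\in I$ is a smooth family of linear maps $A_t:E_{t_0}\to E_t$ with $A_t''+R_tA_t=0$, $\ker A_{t_0}\cap\ker A'_{t_0}=0$ and $\langle A_t'v,A_tw\rangle=\langle A_tv,A_t'w\rangle$ for all $t$, $v,w\in E_{t_0}$. $t$ is regular if $A_t$ is invertible; there $S_t=A_t'A_t^{-1}$ (self-adjoint). $A_t^{-*}=(A_t^* )^{-1}$ where $A_t^*$ is the adjoint. For a $p$-dimensional $W\subset E_{t_0}$ with orthonormal basis $e_1,\dots,e_p$, $(M_t)_{ij}=\langle A_t^{-*}e_i,A_t^{-*}e_j\rangle$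 and $g_W(t)=(\det M_t)^{-1/(2p)}$ at regular $t$. *)

theory Defs
  imports "HOL-Analysis.Analysis"
begin

text \<open>Parallel-frame model: along the unit-speed geodesic c, parallel transport
identifies every normal space E_t with one fixed Euclidean space real^'n
(n = dim M - 1), the covariant derivative along c becomes the ordinary
derivative, and R_t becomes a continuous family of symmetric matrices.\<close>

definition inv_adj :: "real^'n^'n \<Rightarrow> real^'n^'n" where
  "inv_adj A = matrix_inv (transpose A)"

definition gram_M :: "(real \<Rightarrow> real^'n^'n) \<Rightarrow> ('p::finite \<Rightarrow> real^'n) \<Rightarrow> real \<Rightarrow> real^'p^'p" where
  "gram_M A e t = (\<chi> i j. (inv_adj (A t) *v e i) \<bullet> (inv_adj (A t) *v e j))"

definition g_W :: "(real \<Rightarrow> real^'n^'n) \<Rightarrow> ('p::finite \<Rightarrow> real^'n) \<Rightarrow> real \<Rightarrow> real" where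
  "g_W A e t = det (gram_M A e t) powr (- 1 / (2 * real CARD('p)))"

definition orthonormal_fam :: "('p::finite \<Rightarrow> real^'n) \<Rightarrow> bool" where
  "orthonormal_fam w \<longleftrightarrow> (\<forall>i j. w i \<bullet> w j = (if i = j then 1 else 0))"

definition S1_op :: "real^'n^'n \<Rightarrow> ('p::finite \<Rightarrow> real^'n) \<Rightarrow> real^'n \<Rightarrow> real^'n" where
  "S1_op S w x = (\<Sum>i\<in>UNIV. ((S *v x) \<bullet> w i) *\<^sub>R w i)"

definition S2_op :: "real^'n^'n \<Rightarrow> ('p::finite \<Rightarrow> real^'n) \<Rightarrow> real^'n \<Rightarrow> real^'n" where
  "S2_op S w x = S *v x - S1_op S w x"

definition tr_S1 :: "real^'n^'n \<Rightarrow> ('p::finite \<Rightarrow> real^'n) \<Rightarrow> real" where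
  "tr_S1 S w = (\<Sum>i\<in>UNIV. S1_op S w (w i) \<bullet> w i)"

definition tr_S1_sq :: "real^'n^'n \<Rightarrow> ('p::finite \<Rightarrow> real^'n) \<Rightarrow> real" where
  "tr_S1_sq S w = (\<Sum>i\<in>UNIV. S1_op S w (S1_op S w (w i)) \<bullet> w i)"

definition tr_S2T_S2 :: "real^'n^'n \<Rightarrow> ('p::finite \<Rightarrow> real^'n) \<Rightarrow> real" where
  "tr_S2T_S2 S w = (\<Sum>i\<in>UNIV. S2_op S w (w i) \<bullet> S2_op S w (w i))"

end

theory Submission
  imports Defs
begin


definition vder :: "(real \<Rightarrow> real^'n) \<Rightarrow> real^'n \<Rightarrow> real \<Rightarrow> bool" where
  "vder f D s \<longleftrightarrow> (\<forall>a. ((\<lambda>u. f u $ a) has_real_derivative D $ a) (at s))"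

definition mder :: "(real \<Rightarrow> real^'n^'m) \<Rightarrow> real^'n^'m \<Rightarrow> real \<Rightarrow> bool" where
  "mder F D s \<longleftrightarrow> (\<forall>a b. ((\<lambda>u. F u $ a $ b) has_real_derivative D $ a $ b) (at s))"

lemma mder_of_hvd:
  fixes F :: "real \<Rightarrow> real^'n^'m"
  assumes "(F has_vector_derivative D) (at s)"
  shows "mder F D s"
  unfolding mder_def
proof (intro allI)
  fix a b
  have bl: "bounded_linear (\<lambda>M::real^'n^'m. M $ a $ b)"
    by (intro bounded_linear_compose[OF bounded_linear_vec_nth] bounded_linear_vec_nth)
  have "((\<lambda>u. F u $ a $ b) has_vector_derivative D $ a $ b) (at s)"
    using bounded_linear.has_vector_derivative[OF bl assms] by simp
  then show "((\<lambda>u. F u $ a $ b) has_real_derivative D $ a $ b) (at s)"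
    by (simp add: has_real_derivative_iff_has_vector_derivative)
qed

lemma mder_mult:
  assumes "mder F F' s" "mder G G' s"
  shows "mder (\<lambda>u. F u ** G u) (F' ** G s + F s ** G') s"
  using assms unfolding mder_def matrix_matrix_mult_def
  by (auto intro!: derivative_eq_intros simp: sum.distrib algebra_simps)

lemma mder_transpose:
  assumes "mder F F' s"
  shows "mder (\<lambda>u. transpose (F u)) (transpose F') s"
  using assms unfolding mder_def transpose_def by auto

lemma mder_const: "mder (\<lambda>u. C) 0 s"
  unfolding mder_def by (auto intro!: derivative_eq_intros)

lemma mder_add:
  assumes "mder F F' s" "mder G G' s"
  shows "mder (\<lambda>u. F u + G u) (F' + G') s"
  using assms unfolding mder_def by (auto intro!: derivative_eq_intros)

lemma vder_mv:
  assumes "mder F F' s" "vder x x' s"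
  shows "vder (\<lambda>u. F u *v x u) (F' *v x s + F s *v x') s"
  using assms unfolding mder_def vder_def matrix_vector_mult_def
  by (auto intro!: derivative_eq_intros simp: sum.distrib algebra_simps)

lemma vder_const: "vder (\<lambda>u. c) 0 s"
  unfolding vder_def by (auto intro!: derivative_eq_intros)

lemma der_inner:
  assumes "vder x x' s" "vder y y' s"
  shows "((\<lambda>u. x u \<bullet> y u) has_real_derivative (x' \<bullet> y s + x s \<bullet> y')) (at s)"
  using assms unfolding vder_def inner_vec_def
  by (auto intro!: derivative_eq_intros simp: sum.distrib algebra_simps)



lemma prod_rowrep:
  fixes F D :: "real^'n^'n"
  shows "(\<Prod>i\<in>UNIV. (\<chi> i. if i = k then D $ i else F $ i) $ i $ p i)
     = D $ k $ p k * (\<Prod>i\<in>UNIV - {k}. F $ i $ p i)"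
proof -
  have "(\<Prod>i\<in>UNIV. (\<chi> i. if i = k then D $ i else F $ i) $ i $ p i)
      = (\<chi> i. if i = k then D $ i else F $ i) $ k $ p k * (\<Prod>i\<in>UNIV - {k}. (\<chi> i. if i = k then D $ i else F $ i) $ i $ p i)"
    by (rule prod.remove) auto
  also have "\<dots> = D $ k $ p k * (\<Prod>i\<in>UNIV - {k}. F $ i $ p i)"
    by (auto intro!: prod.cong)
  finally show ?thesis .
qed

lemma det_der_gen:
  fixes F :: "real \<Rightarrow> real^'n^'n"
  assumes "mder F F' s"
  shows "((\<lambda>u. det (F u)) has_real_derivative
     (\<Sum>k\<in>UNIV. det (\<chi> i. if i = k then F' $ i else F s $ i))) (at s)"
proof -
  have d: "((\<lambda>u. \<Prod>i\<in>UNIV. F u $ i $ p i) has_real_derivative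
           (\<Sum>k\<in>UNIV. F' $ k $ p k * (\<Prod>i\<in>UNIV - {k}. F s $ i $ p i))) (at s)" for p
    using has_field_derivative_prod[of UNIV "\<lambda>i u. F u $ i $ p i" "\<lambda>i. F' $ i $ p i" s] assms
    unfolding mder_def by auto
  have "((\<lambda>u. det (F u)) has_real_derivative
     (\<Sum>p\<in>{p. p permutes (UNIV::'n set)}. of_int (sign p) *
        (\<Sum>k\<in>UNIV. F' $ k $ p k * (\<Prod>i\<in>UNIV - {k}. F s $ i $ p i)))) (at s)"
    unfolding det_def
    by (intro DERIV_sum DERIV_cmult d)
  also have "(\<Sum>p\<in>{p. p permutes (UNIV::'n set)}. of_int (sign p) *
        (\<Sum>k\<in>UNIV. F' $ k $ p k * (\<Prod>i\<in>UNIV - {k}. F s $ i $ p i)))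
     = (\<Sum>k\<in>UNIV. det (\<chi> i. if i = k then F' $ i else F s $ i))"
    unfolding det_def prod_rowrep sum_distrib_left
    by (rule sum.swap)
  finally show ?thesis .
qed

lemma matrix_inv_both:
  fixes A :: "real^'n^'m"
  assumes "invertible A"
  shows "A ** matrix_inv A = mat 1" "matrix_inv A ** A = mat 1"
proof -
  have "\<exists>A'. A ** A' = mat 1 \<and> A' ** A = mat 1" using assms unfolding invertible_def by blast
  from someI_ex[OF this] show "A ** matrix_inv A = mat 1" "matrix_inv A ** A = mat 1"
    unfolding matrix_inv_def by auto
qed

lemma det_rowrep:
  fixes F D :: "real^'n^'n"
  assumes "invertible F"
  shows "det (\<chi> i. if i = k then D $ i else F $ i) = (D ** matrix_inv F) $ k $ k * det F"
proof -
  let ?N = "D ** matrix_inv F"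
  have DN: "D = ?N ** F"
    using matrix_inv_both(2)[OF assms] by (metis matrix_mul_assoc matrix_mul_rid)
  have rowk: "D $ k = (\<Sum>j\<in>UNIV. (row k ?N) $ j *s row j F)"
    by (subst DN) (simp add: vec_eq_iff matrix_matrix_mult_def row_def sum_component mult.commute)
  have "(\<chi> i. if i = k then D $ i else F $ i) =
        (\<chi> i. if i = k then sum (\<lambda>j. (row k ?N)$j *s row j F) (UNIV::'n set) else row i F)"
    using rowk by (simp add: vec_eq_iff row_def)
  then show ?thesis
    using cramer_lemma_transpose[of k "row k ?N" F] by (simp add: row_def)
qed



lemma matrix_mul_rneg: "(A::real^'n^'m) ** (- B) = - (A ** (B::real^'p^'n))"
  by (simp add: vec_eq_iff matrix_matrix_mult_def sum_negf)

lemma matrix_mul_lneg: "(- A::real^'n^'m) ** B = - (A ** (B::real^'p^'n))"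
  by (simp add: vec_eq_iff matrix_matrix_mult_def sum_negf)

lemma det_der:
  fixes F :: "real \<Rightarrow> real^'n^'n"
  assumes "mder F F' s" "invertible (F s)"
  shows "((\<lambda>u. det (F u)) has_real_derivative
     det (F s) * (\<Sum>k\<in>UNIV. (F' ** matrix_inv (F s)) $ k $ k)) (at s)"
  using det_der_gen[OF assms(1)] det_rowrep[OF assms(2)]
  by (simp add: sum_distrib_left mult.commute)

lemma ev_nonzero:
  fixes f :: "real \<Rightarrow> real"
  assumes "(f has_real_derivative D) (at s)" "f s \<noteq> 0"
  shows "eventually (\<lambda>u. f u \<noteq> 0) (nhds s)"
proof -
  have "isCont f s" using assms(1) by (rule DERIV_isCont)
  then have "(f \<longlongrightarrow> f s) (at s)" by (simp add: isCont_def)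
  then have "eventually (\<lambda>u. f u \<noteq> 0) (at s)" using assms(2) by (rule tendsto_imp_eventually_ne)
  then show ?thesis using assms(2) by (simp add: eventually_nhds_conv_at)
qed

lemma inv_entry:
  fixes F :: "real^'n^'n"
  assumes "det F \<noteq> 0"
  shows "matrix_inv F $ i $ j = det (\<chi> a b. if b = i then (axis j 1 :: real^'n) $ a else F $ a $ b) / det F"
proof -
  have inv: "invertible F" using assms by (simp add: invertible_det_nz)
  let ?x = "matrix_inv F *v axis j 1"
  have "F *v ?x = axis j 1"
    using matrix_inv_both(1)[OF inv] by (simp add: matrix_vector_mul_assoc)
  then have "?x = (\<chi> k. det(\<chi> a b. if b = k then (axis j 1 :: real^'n) $ a else F $ a $ b) / det F)"
    using cramer[OF assms] by blast
  then have "?x $ i = det (\<chi> a b. if b = i then (axis j 1 :: real^'n) $ a else F $ a $ b) / det F"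
    by simp
  moreover have "?x $ i = matrix_inv F $ i $ j"
    by (simp add: matrix_vector_mult_def axis_def if_distrib cong: if_cong)
  ultimately show ?thesis by simp
qed

lemma inv_der:
  fixes F :: "real \<Rightarrow> real^'n^'n"
  assumes F: "mder F F' s" and inv: "invertible (F s)"
  shows "mder (\<lambda>u. matrix_inv (F u)) (- (matrix_inv (F s) ** F' ** matrix_inv (F s))) s"
proof -
  have dnz: "det (F s) \<noteq> 0" using inv by (simp add: invertible_det_nz)
  have evd: "eventually (\<lambda>u. det (F u) \<noteq> 0) (nhds s)"
    using ev_nonzero[OF det_der_gen[OF F] dnz] .
  have "\<exists>D. mder (\<lambda>u. matrix_inv (F u)) D s"
  proof -
    have "\<exists>d. ((\<lambda>u. matrix_inv (F u) $ i $ j) has_real_derivative d) (at s)" for i j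
    proof -
      let ?C = "\<lambda>u. (\<chi> a b. if b = i then (axis j 1 :: real^'n) $ a else F u $ a $ b)"
      have mC: "mder ?C (\<chi> a b. if b = i then 0 else F' $ a $ b) s"
        using F unfolding mder_def by (auto intro!: derivative_eq_intros)
      obtain dn where dn: "((\<lambda>u. det (?C u)) has_real_derivative dn) (at s)"
        using det_der_gen[OF mC] by blast
      obtain dd where dd: "((\<lambda>u. det (F u)) has_real_derivative dd) (at s)"
        using det_der_gen[OF F] by blast
      have q: "((\<lambda>u. det (?C u) / det (F u)) has_real_derivative
                 (dn * det (F s) - det (?C s) * dd) / (det (F s) * det (F s))) (at s)"
        by (rule DERIV_divide[OF dn dd dnz])
      have "eventually (\<lambda>u. matrix_inv (F u) $ i $ j = det (?C u) / det (F u)) (nhds s)"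
        using evd by eventually_elim (rule inv_entry)
      then have "((\<lambda>u. matrix_inv (F u) $ i $ j) has_real_derivative
                 (dn * det (F s) - det (?C s) * dd) / (det (F s) * det (F s))) (at s)"
        using q by (subst DERIV_cong_ev[OF refl _ refl]) auto
      then show ?thesis by blast
    qed
    then obtain d where "\<And>i j. ((\<lambda>u. matrix_inv (F u) $ i $ j) has_real_derivative d i j) (at s)"
      by metis
    then have "mder (\<lambda>u. matrix_inv (F u)) (\<chi> i j. d i j) s" unfolding mder_def by simp
    then show ?thesis by blast
  qed
  then obtain D where D: "mder (\<lambda>u. matrix_inv (F u)) D s" by blast
  have P: "mder (\<lambda>u. F u ** matrix_inv (F u)) (F' ** matrix_inv (F s) + F s ** D) s"
    by (rule mder_mult[OF F D])
  have ev1: "eventually (\<lambda>u. F u ** matrix_inv (F u) = mat 1) (nhds s)"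
    using evd by eventually_elim (simp add: matrix_inv_both invertible_det_nz)
  have "mder (\<lambda>u. F u ** matrix_inv (F u)) 0 s"
    unfolding mder_def
  proof (intro allI)
    fix a b
    have "((\<lambda>u. (mat 1 :: real^'n^'n) $ a $ b) has_real_derivative 0) (at s)" by simp
    moreover have "eventually (\<lambda>u. (F u ** matrix_inv (F u)) $ a $ b = (mat 1 :: real^'n^'n) $ a $ b) (nhds s)"
      using ev1 by eventually_elim simp
    ultimately show "((\<lambda>u. (F u ** matrix_inv (F u)) $ a $ b) has_real_derivative 0 $ a $ b) (at s)"
      by (subst DERIV_cong_ev[OF refl _ refl]) auto
  qed
  then have "F' ** matrix_inv (F s) + F s ** D = 0"
  proof -
    have "(F' ** matrix_inv (F s) + F s ** D) $ a $ b = 0" for a b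
    proof -
      have 1: "((\<lambda>u. (F u ** matrix_inv (F u)) $ a $ b) has_real_derivative (F' ** matrix_inv (F s) + F s ** D) $ a $ b) (at s)"
        using P unfolding mder_def by blast
      have 2: "((\<lambda>u. (F u ** matrix_inv (F u)) $ a $ b) has_real_derivative (0::real^'n^'n) $ a $ b) (at s)"
        using \<open>mder (\<lambda>u. F u ** matrix_inv (F u)) 0 s\<close> unfolding mder_def by blast
      from DERIV_unique[OF 1 2] show ?thesis by simp
    qed
    then show ?thesis by (simp add: vec_eq_iff)
  qed
  then have "F s ** D = - (F' ** matrix_inv (F s))"
    by (simp add: eq_neg_iff_add_eq_0 add.commute)
  then have "matrix_inv (F s) ** (F s ** D) = - (matrix_inv (F s) ** F' ** matrix_inv (F s))"
    by (simp add: matrix_mul_assoc matrix_mul_rneg)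
  then have "D = - (matrix_inv (F s) ** F' ** matrix_inv (F s))"
    by (simp add: matrix_mul_assoc matrix_inv_both[OF inv] matrix_mul_lid)
  then show ?thesis using D by simp
qed



definition gram :: "('p::finite \<Rightarrow> real^'n) \<Rightarrow> real^'p^'p" where
  "gram X = (\<chi> i j. X i \<bullet> X j)"

lemma orth_inj: "orthonormal_fam w \<Longrightarrow> inj w"
  unfolding orthonormal_fam_def inj_def
  by (metis one_neq_zero)

lemma orth_sum_inner:
  assumes "orthonormal_fam w"
  shows "(\<Sum>k\<in>UNIV. c k *\<^sub>R w k) \<bullet> w l = c l"
proof -
  have "(\<Sum>k\<in>UNIV. c k *\<^sub>R w k) \<bullet> w l = (\<Sum>k\<in>UNIV. c k * (w k \<bullet> w l))"
    by (simp add: inner_sum_left)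
  also have "\<dots> = (\<Sum>k\<in>UNIV. if k = l then c k else 0)"
    using assms unfolding orthonormal_fam_def by (intro sum.cong) auto
  also have "\<dots> = c l" by simp
  finally show ?thesis .
qed

lemma orth_expand:
  assumes w: "orthonormal_fam w" and x: "x \<in> span (range w)"
  shows "x = (\<Sum>k\<in>UNIV. (x \<bullet> w k) *\<^sub>R w k)"
proof -
  obtain c where c: "x = (\<Sum>v\<in>range w. c v *\<^sub>R v)"
    using x span_finite[of "range w"] by auto
  have "x = (\<Sum>k\<in>UNIV. c (w k) *\<^sub>R w k)"
    using c sum.reindex[OF orth_inj[OF w], of "\<lambda>v. c v *\<^sub>R v"] by simp
  moreover then have "x \<bullet> w l = c (w l)" for l
    using orth_sum_inner[OF w] by simp
  ultimately show ?thesis by simp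
qed

lemma matrix_inv_unique:
  fixes F Y :: "real^'n^'n"
  assumes "invertible F" "F ** Y = mat 1"
  shows "matrix_inv F = Y"
proof -
  have "matrix_inv F = matrix_inv F ** (F ** Y)" using assms(2) by simp
  also have "\<dots> = Y" by (simp add: matrix_mul_assoc matrix_inv_both(2)[OF assms(1)])
  finally show ?thesis .
qed

lemma gram_C:
  assumes w: "orthonormal_fam w" and sp: "span (range w) = span (range X)"
  defines "C \<equiv> (\<chi> k j. X j \<bullet> w k) :: real^'p^'p"
  shows "\<And>j. X j = (\<Sum>k\<in>UNIV. C $ k $ j *\<^sub>R w k)" and "gram X = transpose C ** C"
proof -
  show ex: "X j = (\<Sum>k\<in>UNIV. C $ k $ j *\<^sub>R w k)" for j
  proof -
    have "X j \<in> span (range w)" using sp by (simp add: span_base)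
    from orth_expand[OF w this] show ?thesis by (simp add: C_def)
  qed
  show "gram X = transpose C ** C"
  proof -
    have "X i \<bullet> X j = (\<Sum>k\<in>UNIV. C $ k $ i * C $ k $ j)" for i j
    proof -
      have "X i \<bullet> X j = (\<Sum>k\<in>UNIV. C $ k $ i *\<^sub>R w k) \<bullet> X j" using ex[of i] by simp
      also have "\<dots> = (\<Sum>k\<in>UNIV. C $ k $ i * (w k \<bullet> X j))" by (simp add: inner_sum_left)
      also have "\<dots> = (\<Sum>k\<in>UNIV. C $ k $ i * C $ k $ j)" by (simp add: C_def inner_commute)
      finally show ?thesis .
    qed
    then show ?thesis
      by (simp add: gram_def vec_eq_iff matrix_matrix_mult_def transpose_def)
  qed
qed




lemma sum4_swap:
  fixes f :: "'a::finite \<Rightarrow> 'b::finite \<Rightarrow> 'c::finite \<Rightarrow> 'd::finite \<Rightarrow> real"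
  shows "(\<Sum>i\<in>UNIV. \<Sum>j\<in>UNIV. \<Sum>k\<in>UNIV. \<Sum>l\<in>UNIV. f i j k l)
       = (\<Sum>k\<in>UNIV. \<Sum>l\<in>UNIV. \<Sum>i\<in>UNIV. \<Sum>j\<in>UNIV. f i j k l)"
proof -
  have "(\<Sum>i\<in>UNIV. \<Sum>j\<in>UNIV. \<Sum>k\<in>UNIV. \<Sum>l\<in>UNIV. f i j k l)
      = (\<Sum>i\<in>UNIV. \<Sum>k\<in>UNIV. \<Sum>j\<in>UNIV. \<Sum>l\<in>UNIV. f i j k l)"
    by (rule sum.cong[OF refl], rule sum.swap)
  also have "\<dots> = (\<Sum>k\<in>UNIV. \<Sum>i\<in>UNIV. \<Sum>j\<in>UNIV. \<Sum>l\<in>UNIV. f i j k l)"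
    by (rule sum.swap)
  also have "\<dots> = (\<Sum>k\<in>UNIV. \<Sum>i\<in>UNIV. \<Sum>l\<in>UNIV. \<Sum>j\<in>UNIV. f i j k l)"
    by (rule sum.cong[OF refl], rule sum.cong[OF refl], rule sum.swap)
  also have "\<dots> = (\<Sum>k\<in>UNIV. \<Sum>l\<in>UNIV. \<Sum>i\<in>UNIV. \<Sum>j\<in>UNIV. f i j k l)"
    by (rule sum.cong[OF refl], rule sum.swap)
  finally show ?thesis .
qed

lemma CYC_entry:
  fixes C Y :: "real^'p^'p"
  shows "(C ** Y ** transpose C) $ k $ l = (\<Sum>i\<in>UNIV. \<Sum>j\<in>UNIV. C $ k $ i * Y $ i $ j * C $ l $ j)"
proof -
  have "(C ** Y ** transpose C) $ k $ l = (\<Sum>j\<in>UNIV. (\<Sum>i\<in>UNIV. C $ k $ i * Y $ i $ j) * C $ l $ j)"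
    by (simp add: matrix_matrix_mult_def transpose_def)
  also have "\<dots> = (\<Sum>j\<in>UNIV. \<Sum>i\<in>UNIV. C $ k $ i * Y $ i $ j * C $ l $ j)"
    by (simp add: sum_distrib_right)
  also have "\<dots> = (\<Sum>i\<in>UNIV. \<Sum>j\<in>UNIV. C $ k $ i * Y $ i $ j * C $ l $ j)"
    by (rule sum.swap)
  finally show ?thesis .
qed



lemma red:
  fixes X w :: "'p::finite \<Rightarrow> real^'n"
  assumes w: "orthonormal_fam w" and sp: "span (range w) = span (range X)"
    and inv: "invertible (gram X)" and bl: "bilinear \<beta>"
  shows "(\<Sum>i\<in>UNIV. \<Sum>j\<in>UNIV. matrix_inv (gram X) $ i $ j * \<beta> (X i) (X j))
       = (\<Sum>k\<in>UNIV. \<beta> (w k) (w k))"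
proof -
  define C where "C = ((\<chi> k j. X j \<bullet> w k) :: real^'p^'p)"
  have ex: "\<And>j. X j = (\<Sum>k\<in>UNIV. C $ k $ j *\<^sub>R w k)" and gr: "gram X = transpose C ** C"
    using gram_C[OF w sp] unfolding C_def by auto
  have "det (gram X) = det C * det C" using gr by (simp add: det_mul)
  then have "det C \<noteq> 0" using inv by (auto simp: invertible_det_nz)
  then have Ci: "invertible C" by (simp add: invertible_det_nz)
  define Y where "Y = matrix_inv C ** transpose (matrix_inv C)"
  have tr1: "transpose C ** transpose (matrix_inv C) = mat 1"
  proof -
    have "transpose (matrix_inv C ** C) = mat 1" by (simp add: matrix_inv_both(2)[OF Ci])
    then show ?thesis by (simp add: matrix_transpose_mul)
  qed
  have "gram X ** Y = transpose C ** ((C ** matrix_inv C) ** transpose (matrix_inv C))"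
    unfolding gr Y_def by (simp add: matrix_mul_assoc)
  then have "gram X ** Y = mat 1" by (simp add: matrix_inv_both(1)[OF Ci] tr1)
  then have G: "matrix_inv (gram X) = Y" by (rule matrix_inv_unique[OF inv])
  have "C ** Y ** transpose C = (C ** matrix_inv C) ** (transpose (matrix_inv C) ** transpose C)"
    unfolding Y_def by (simp add: matrix_mul_assoc)
  also have "\<dots> = mat 1"
  proof -
    have "transpose (matrix_inv C) ** transpose C = transpose (C ** matrix_inv C)"
      by (rule matrix_transpose_mul[symmetric])
    also have "\<dots> = mat 1" by (simp only: matrix_inv_both(1)[OF Ci] transpose_mat)
    finally show ?thesis by (simp only: matrix_inv_both(1)[OF Ci] matrix_mul_lid)
  qed
  finally have CGC: "C ** Y ** transpose C = mat 1" .
  have bx: "\<beta> (X i) (X j) = (\<Sum>k\<in>UNIV. \<Sum>l\<in>UNIV. C $ k $ i * C $ l $ j * \<beta> (w k) (w l))" for i j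
  proof -
    have "\<beta> (X i) (X j) = (\<Sum>(k,l)\<in>UNIV \<times> UNIV. \<beta> (C $ k $ i *\<^sub>R w k) (C $ l $ j *\<^sub>R w l))"
      using bilinear_sum[OF bl, of "\<lambda>k. C$k$i *\<^sub>R w k" UNIV "\<lambda>l. C$l$j *\<^sub>R w l" UNIV]
        ex[of i, symmetric] ex[of j, symmetric] by simp
    also have "\<dots> = (\<Sum>k\<in>UNIV. \<Sum>l\<in>UNIV. \<beta> (C $ k $ i *\<^sub>R w k) (C $ l $ j *\<^sub>R w l))"
      by (simp add: sum.cartesian_product)
    also have "\<dots> = (\<Sum>k\<in>UNIV. \<Sum>l\<in>UNIV. C $ k $ i * C $ l $ j * \<beta> (w k) (w l))"
      by (simp add: bilinear_lmul[OF bl] bilinear_rmul[OF bl] ac_simps)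
    finally show ?thesis .
  qed
  have "(\<Sum>i\<in>UNIV. \<Sum>j\<in>UNIV. Y $ i $ j * \<beta> (X i) (X j))
     = (\<Sum>k\<in>UNIV. \<Sum>l\<in>UNIV. (\<Sum>i\<in>UNIV. \<Sum>j\<in>UNIV. C $ k $ i * Y $ i $ j * C $ l $ j) * \<beta> (w k) (w l))"
  proof -
    have "(\<Sum>i\<in>UNIV. \<Sum>j\<in>UNIV. Y $ i $ j * \<beta> (X i) (X j))
      = (\<Sum>i\<in>UNIV. \<Sum>j\<in>UNIV. \<Sum>k\<in>UNIV. \<Sum>l\<in>UNIV. C $ k $ i * Y $ i $ j * C $ l $ j * \<beta> (w k) (w l))"
      unfolding bx by (simp add: sum_distrib_left ac_simps)
    also have "\<dots> = (\<Sum>k\<in>UNIV. \<Sum>l\<in>UNIV. \<Sum>i\<in>UNIV. \<Sum>j\<in>UNIV. C $ k $ i * Y $ i $ j * C $ l $ j * \<beta> (w k) (w l))"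
      by (rule sum4_swap)
    also have "\<dots> = (\<Sum>k\<in>UNIV. \<Sum>l\<in>UNIV. (\<Sum>i\<in>UNIV. \<Sum>j\<in>UNIV. C $ k $ i * Y $ i $ j * C $ l $ j) * \<beta> (w k) (w l))"
      by (simp add: sum_distrib_right)
    finally show ?thesis .
  qed
  also have "\<dots> = (\<Sum>k\<in>UNIV. \<Sum>l\<in>UNIV. (C ** Y ** transpose C) $ k $ l * \<beta> (w k) (w l))"
    by (simp add: CYC_entry)
  also have "\<dots> = (\<Sum>k\<in>UNIV. \<beta> (w k) (w k))"
  proof -
    have "(mat 1 :: real^'p^'p)$k$l * \<beta> (w k) (w l) = (if l = k then \<beta> (w k) (w l) else 0)" for k l
      by (simp add: mat_def)
    then show ?thesis unfolding CGC by simp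
  qed
  finally show ?thesis using G by simp
qed



lemma X_inj:
  fixes X :: "'p::finite \<Rightarrow> real^'n"
  assumes li: "\<And>c::real^'p. (\<Sum>i\<in>UNIV. c$i *\<^sub>R X i) = 0 \<Longrightarrow> c = 0"
  shows "inj X"
proof (rule injI, rule ccontr)
  fix i j assume eq: "X i = X j" and ne: "i \<noteq> j"
  let ?c = "(axis i 1 - axis j 1) :: real^'p"
  have "(\<Sum>k\<in>UNIV. ?c$k *\<^sub>R X k) = (\<Sum>k\<in>UNIV. (if k = i then X k else 0) - (if k = j then X k else 0))"
    by (intro sum.cong) (auto simp: axis_def)
  also have "\<dots> = X i - X j" by (simp add: sum_subtractf)
  also have "\<dots> = 0" using eq by simp
  finally have "?c = 0" by (rule li)
  then have "?c $ i = 0" by simp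
  then show False using ne by (simp add: axis_def)
qed

lemma X_indep:
  fixes X :: "'p::finite \<Rightarrow> real^'n"
  assumes li: "\<And>c::real^'p. (\<Sum>i\<in>UNIV. c$i *\<^sub>R X i) = 0 \<Longrightarrow> c = 0"
  shows "independent (range X)"
proof -
  have inj: "inj X" by (rule X_inj[of X, OF li])
  have "\<forall>c. (\<Sum>v\<in>range X. c v *\<^sub>R v) = 0 \<longrightarrow> (\<forall>v\<in>range X. c v = 0)"
  proof (intro allI impI ballI)
    fix c v assume s: "(\<Sum>v\<in>range X. c v *\<^sub>R v) = 0" and v: "v \<in> range X"
    have "(\<Sum>i\<in>UNIV. (\<chi> k. c (X k))$i *\<^sub>R X i) = 0"
      using s sum.reindex[OF inj, of "\<lambda>v. c v *\<^sub>R v"] by simp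
    then have "(\<chi> k. c (X k)) = (0::real^'p)" by (rule li)
    then show "c v = 0" using v by (auto simp: vec_eq_iff)
  qed
  then show ?thesis by (simp add: independent_explicit)
qed

lemma ONB_exists:
  fixes X :: "'p::finite \<Rightarrow> real^'n"
  assumes li: "\<And>c::real^'p. (\<Sum>i\<in>UNIV. c$i *\<^sub>R X i) = 0 \<Longrightarrow> c = 0"
  shows "\<exists>w::'p \<Rightarrow> real^'n. orthonormal_fam w \<and> span (range w) = span (range X)"
proof -
  have ind: "independent (range X)" by (rule X_indep[of X, OF li])
  have cX: "card (range X) = CARD('p)" using X_inj[of X, OF li] by (simp add: card_image)
  have sub: "subspace (span (range X))" by simp
  obtain B where B: "B \<subseteq> span (range X)" "pairwise orthogonal B"
      "\<And>x. x \<in> B \<Longrightarrow> norm x = 1" "independent B" "card B = dim (span (range X))"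
      "span B = span (range X)"
    using orthonormal_basis_subspace[OF sub] by blast
  have "dim (span (range X)) = CARD('p)"
    using dim_eq_card_independent[OF ind] cX by simp
  then have cB: "card B = card (UNIV::'p set)" using B(5) by simp
  have fB: "finite B" using B(4) by (rule independent_imp_finite)
  obtain h where h: "bij_betw h (UNIV::'p set) B"
    using finite_same_card_bij[OF finite fB cB[symmetric]] by blast
  have rh: "range h = B" using h by (simp add: bij_betw_def)
  have "orthonormal_fam h"
    unfolding orthonormal_fam_def
  proof (intro allI)
    fix i j
    show "h i \<bullet> h j = (if i = j then 1 else 0)"
    proof (cases "i = j")
      case True
      then show ?thesis using B(3)[of "h i"] rh by (auto simp: norm_eq_1)
    next
      case False
      then have "h i \<noteq> h j" using h by (auto simp: bij_betw_def inj_def)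
      then show ?thesis using B(2) rh False unfolding pairwise_def orthogonal_def by auto
    qed
  qed
  then show ?thesis using rh B(6) by (intro exI[of _ h]) auto
qed

lemma gram_pos:
  fixes X :: "'p::finite \<Rightarrow> real^'n"
  assumes li: "\<And>c::real^'p. (\<Sum>i\<in>UNIV. c$i *\<^sub>R X i) = 0 \<Longrightarrow> c = 0"
  shows "det (gram X) > 0" "invertible (gram X)"
proof -
  have inv: "invertible (gram X)"
    unfolding invertible_left_inverse matrix_left_invertible_ker
  proof (intro allI impI)
    fix c :: "real^'p" assume c: "gram X *v c = 0"
    let ?V = "\<Sum>j\<in>UNIV. c$j *\<^sub>R X j"
    have "X i \<bullet> ?V = (gram X *v c) $ i" for i
      by (simp add: gram_def matrix_vector_mult_def inner_sum_right mult.commute)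
    then have "X i \<bullet> ?V = 0" for i using c by simp
    then have "?V \<bullet> ?V = 0" by (simp add: inner_sum_left)
    then have "?V = 0" by simp
    then show "c = 0" by (rule li)
  qed
  then show "invertible (gram X)" .
  obtain w :: "'p \<Rightarrow> real^'n" where w: "orthonormal_fam w" "span (range w) = span (range X)"
    using ONB_exists[of X, OF li] by blast
  define C where "C = ((\<chi> k j. X j \<bullet> w k) :: real^'p^'p)"
  have "gram X = transpose C ** C" using gram_C[OF w] unfolding C_def by blast
  then have "det (gram X) = det C * det C" by (simp add: det_mul)
  moreover have "det (gram X) \<noteq> 0" using inv by (simp add: invertible_det_nz)
  ultimately show "det (gram X) > 0" by (auto simp: zero_less_mult_iff linorder_neq_iff)
qed




lemma li_Be:
  fixes B :: "real^'n^'n" and e :: "'p::finite \<Rightarrow> real^'n"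
  assumes B: "invertible B" and e: "orthonormal_fam e"
  shows "\<And>c::real^'p. (\<Sum>i\<in>UNIV. c$i *\<^sub>R (B *v e i)) = 0 \<Longrightarrow> c = 0"
proof -
  fix c :: "real^'p" assume s: "(\<Sum>i\<in>UNIV. c$i *\<^sub>R (B *v e i)) = 0"
  have lin: "linear ((*v) B)" by (rule matrix_vector_mul_linear)
  have "(\<Sum>i\<in>UNIV. c$i *\<^sub>R (B *v e i)) = B *v (\<Sum>i\<in>UNIV. c$i *\<^sub>R e i)"
    by (simp add: linear_sum[OF lin] linear_scale[OF lin])
  then have "B *v (\<Sum>i\<in>UNIV. c$i *\<^sub>R e i) = 0" using s by simp
  then have "matrix_inv B *v (B *v (\<Sum>i\<in>UNIV. c$i *\<^sub>R e i)) = 0" by simp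
  then have v0: "(\<Sum>i\<in>UNIV. c$i *\<^sub>R e i) = 0"
    by (simp add: matrix_vector_mul_assoc matrix_inv_both(2)[OF B])
  show "c = 0"
  proof (subst vec_eq_iff, intro allI)
    fix l
    have "c $ l = (\<Sum>i\<in>UNIV. c$i *\<^sub>R e i) \<bullet> e l" using orth_sum_inner[OF e] by simp
    then show "c $ l = 0 $ l" using v0 by simp
  qed
qed



lemma sym_inner:
  fixes S :: "real^'n^'n"
  assumes "transpose S = S"
  shows "(S *v x) \<bullet> y = x \<bullet> (S *v y)"
proof -
  have "(S *v x) \<bullet> y = (x v* transpose S) \<bullet> y" by simp
  also have "\<dots> = x \<bullet> (transpose S *v y)" by (rule dot_lmul_matrix)
  finally show ?thesis using assms by simp
qed

lemma mv_neg: "(- M) *v x = - ((M::real^'n^'m) *v x)"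
  by (simp add: vec_eq_iff matrix_vector_mult_def sum_negf)

lemma inv_adj_eq:
  fixes A :: "real^'n^'n"
  assumes "invertible A"
  shows "inv_adj A = transpose (matrix_inv A)"
proof -
  have "transpose A ** transpose (matrix_inv A) = transpose (matrix_inv A ** A)"
    by (simp add: matrix_transpose_mul)
  also have "\<dots> = mat 1" by (simp add: matrix_inv_both(2)[OF assms])
  finally have "transpose A ** transpose (matrix_inv A) = mat 1" .
  then show ?thesis unfolding inv_adj_def
    by (rule matrix_inv_unique[OF transpose_invertible[OF assms]])
qed

lemma S_sym:
  fixes A A' :: "real^'n^'n"
  assumes inv: "invertible A" and lag: "transpose A' ** A = transpose A ** A'"
  shows "transpose (A' ** matrix_inv A) = A' ** matrix_inv A"
proof -
  let ?Ai = "matrix_inv A"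
  have "transpose ?Ai ** (transpose A' ** A) ** ?Ai = transpose ?Ai ** (transpose A ** A') ** ?Ai"
    using lag by simp
  moreover have "transpose ?Ai ** (transpose A' ** A) ** ?Ai = transpose ?Ai ** transpose A' ** (A ** ?Ai)"
    by (simp add: matrix_mul_assoc)
  moreover have "transpose ?Ai ** (transpose A ** A') ** ?Ai = (transpose ?Ai ** transpose A) ** A' ** ?Ai"
    by (simp add: matrix_mul_assoc)
  moreover have "transpose ?Ai ** transpose A = mat 1"
    using matrix_transpose_mul[of A ?Ai] matrix_inv_both(1)[OF inv] by simp
  ultimately have "transpose ?Ai ** transpose A' = A' ** ?Ai"
    by (simp add: matrix_inv_both(1)[OF inv] matrix_mul_assoc)
  then show ?thesis by (simp add: matrix_transpose_mul)
qed

definition Xf :: "(real \<Rightarrow> real^'n^'n) \<Rightarrow> ('p::finite \<Rightarrow> real^'n) \<Rightarrow> real \<Rightarrow> 'p \<Rightarrow> real^'n" where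
  "Xf A e u i = inv_adj (A u) *v e i"

definition Sf :: "(real \<Rightarrow> real^'n^'n) \<Rightarrow> (real \<Rightarrow> real^'n^'n) \<Rightarrow> real \<Rightarrow> real^'n^'n" where
  "Sf A A' u = A' u ** matrix_inv (A u)"

lemma gram_M_eq: "gram_M A e u = gram (Xf A e u)"
  by (simp add: gram_M_def gram_def Xf_def)

lemma pointwise:
  fixes A A' A'' R :: "real \<Rightarrow> real^'n^'n" and e :: "'p::finite \<Rightarrow> real^'n"
  assumes dA: "(A has_vector_derivative A' u) (at u)"
    and dA': "(A' has_vector_derivative A'' u) (at u)"
    and jac: "A'' u + R u ** A u = 0"
    and lag: "transpose (A' u) ** A u = transpose (A u) ** A' u"
    and inv: "invertible (A u)"
  shows "transpose (Sf A A' u) = Sf A A' u"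
    and "vder (\<lambda>v. Xf A e v i) (- (Sf A A' u *v Xf A e u i)) u"
    and "mder (gram_M A e) (\<chi> i j. -2 * ((Sf A A' u *v Xf A e u i) \<bullet> Xf A e u j)) u"
    and "mder (Sf A A') (- R u - Sf A A' u ** Sf A A' u) u"
proof -
  let ?S = "Sf A A' u"
  show Ssym: "transpose ?S = ?S" unfolding Sf_def by (rule S_sym[OF inv lag])
  have mA: "mder A (A' u) u" by (rule mder_of_hvd[OF dA])
  have mA': "mder A' (A'' u) u" by (rule mder_of_hvd[OF dA'])
  have mT: "mder (\<lambda>v. transpose (A v)) (transpose (A' u)) u" by (rule mder_transpose[OF mA])
  have mB0: "mder (\<lambda>v. matrix_inv (transpose (A v)))
      (- (matrix_inv (transpose (A u)) ** transpose (A' u) ** matrix_inv (transpose (A u)))) u"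
    by (rule inv_der[OF mT transpose_invertible[OF inv]])
  have Bu: "matrix_inv (transpose (A u)) = transpose (matrix_inv (A u))"
    using inv_adj_eq[OF inv] unfolding inv_adj_def .
  have "matrix_inv (transpose (A u)) ** transpose (A' u) = transpose ?S"
    unfolding Bu Sf_def by (simp add: matrix_transpose_mul)
  then have "matrix_inv (transpose (A u)) ** transpose (A' u) = ?S" using Ssym by simp
  then have mB: "mder (\<lambda>v. inv_adj (A v)) (- (?S ** inv_adj (A u))) u"
    using mB0 unfolding inv_adj_def by simp
  have vX: "vder (\<lambda>v. Xf A e v i) (- (?S *v Xf A e u i)) u" for i
  proof -
    have "vder (\<lambda>v. inv_adj (A v) *v e i) (- (?S ** inv_adj (A u)) *v e i + inv_adj (A u) *v 0) u"
      by (rule vder_mv[OF mB vder_const])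
    moreover have "- (?S ** inv_adj (A u)) *v e i + inv_adj (A u) *v 0 = - (?S *v (inv_adj (A u) *v e i))"
      by (simp add: mv_neg matrix_vector_mul_assoc)
    ultimately show ?thesis unfolding Xf_def by simp
  qed
  then show "vder (\<lambda>v. Xf A e v i) (- (?S *v Xf A e u i)) u" .
  show "mder (gram_M A e) (\<chi> i j. -2 * ((?S *v Xf A e u i) \<bullet> Xf A e u j)) u"
    unfolding mder_def
  proof (intro allI)
    fix i j
    have "((\<lambda>v. Xf A e v i \<bullet> Xf A e v j) has_real_derivative
       (- (?S *v Xf A e u i)) \<bullet> Xf A e u j + Xf A e u i \<bullet> (- (?S *v Xf A e u j))) (at u)"
      by (rule der_inner[OF vX vX])
    moreover have "(- (?S *v Xf A e u i)) \<bullet> Xf A e u j + Xf A e u i \<bullet> (- (?S *v Xf A e u j))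
       = -2 * ((?S *v Xf A e u i) \<bullet> Xf A e u j)"
      using sym_inner[OF Ssym, of "Xf A e u i" "Xf A e u j"] by simp
    ultimately show "((\<lambda>v. gram_M A e v $ i $ j) has_real_derivative
        (\<chi> i j. -2 * ((?S *v Xf A e u i) \<bullet> Xf A e u j)) $ i $ j) (at u)"
      by (simp add: gram_M_eq gram_def)
  qed
  have mAi: "mder (\<lambda>v. matrix_inv (A v)) (- (matrix_inv (A u) ** A' u ** matrix_inv (A u))) u"
    by (rule inv_der[OF mA inv])
  have "mder (Sf A A') (A'' u ** matrix_inv (A u) + A' u ** - (matrix_inv (A u) ** A' u ** matrix_inv (A u))) u"
    unfolding Sf_def by (rule mder_mult[OF mA' mAi])
  moreover have "A'' u = - (R u ** A u)" using jac by (simp add: eq_neg_iff_add_eq_0)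
  moreover have "A'' u ** matrix_inv (A u) = - R u"
    using calculation(2) by (simp add: matrix_mul_lneg matrix_mul_assoc[symmetric] matrix_inv_both(1)[OF inv])
  ultimately show "mder (Sf A A') (- R u - ?S ** ?S) u"
    by (simp add: Sf_def matrix_mul_rneg matrix_mul_assoc)
qed



definition Hf :: "(real \<Rightarrow> real^'n^'n) \<Rightarrow> (real \<Rightarrow> real^'n^'n) \<Rightarrow> ('p::finite \<Rightarrow> real^'n) \<Rightarrow> real \<Rightarrow> real" where
  "Hf A A' e u = (1 / real CARD('p)) *
     (\<Sum>k\<in>UNIV. \<Sum>j\<in>UNIV. matrix_inv (gram_M A e u) $ j $ k * ((Sf A A' u *v Xf A e u k) \<bullet> Xf A e u j))"

lemma gder:
  fixes A A' A'' R :: "real \<Rightarrow> real^'n^'n" and e :: "'p::finite \<Rightarrow> real^'n"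
  assumes dA: "(A has_vector_derivative A' u) (at u)"
    and dA': "(A' has_vector_derivative A'' u) (at u)"
    and jac: "A'' u + R u ** A u = 0"
    and lag: "transpose (A' u) ** A u = transpose (A u) ** A' u"
    and inv: "invertible (A u)"
    and dpos: "det (gram_M A e u) > 0"
  shows "(g_W A e has_real_derivative g_W A e u * Hf A A' e u) (at u)"
proof -
  let ?S = "Sf A A' u" and ?X = "Xf A e u"
  let ?M' = "(\<chi> i j. -2 * ((?S *v ?X i) \<bullet> ?X j)) :: real^'p^'p"
  let ?G = "matrix_inv (gram_M A e u)"
  let ?d = "det (gram_M A e u)"
  let ?c = "- 1 / (2 * real CARD('p))"
  have mM: "mder (gram_M A e) ?M' u" by (rule pointwise(3)[where A=A and A'=A' and A''=A'' and R=R and u=u and e=e, OF dA dA' jac lag inv])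
  have invM: "invertible (gram_M A e u)" using dpos by (simp add: invertible_det_nz)
  define T where "T = (\<Sum>k\<in>UNIV. (?M' ** ?G) $ k $ k)"
  have dd: "((\<lambda>v. det (gram_M A e v)) has_real_derivative ?d * T) (at u)"
    unfolding T_def by (rule det_der[OF mM invM])
  have gd: "((\<lambda>v. det (gram_M A e v) powr ?c) has_real_derivative ?c * ?d powr (?c - of_nat 1) * (?d * T)) (at u)"
    by (rule DERIV_fun_powr[OF dd dpos])
  have e1: "?d powr (?c - of_nat 1) * ?d = ?d powr ?c"
    using dpos by (simp add: powr_diff)
  have P: "real CARD('p) > 0" by simp
  have cT: "?c * T = Hf A A' e u"
  proof -
    have "T = (\<Sum>k\<in>UNIV. \<Sum>j\<in>UNIV. -2 * (?G $ j $ k * ((?S *v ?X k) \<bullet> ?X j)))"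
      unfolding T_def by (simp add: matrix_matrix_mult_def mult.commute mult.left_commute)
    also have "\<dots> = -2 * (\<Sum>k\<in>UNIV. \<Sum>j\<in>UNIV. ?G $ j $ k * ((?S *v ?X k) \<bullet> ?X j))"
      by (simp add: sum_distrib_left)
    finally show ?thesis unfolding Hf_def using P by simp
  qed
  then have "?c * ?d powr (?c - of_nat 1) * (?d * T) = ?d powr ?c * Hf A A' e u"
  proof -
    have "?c * ?d powr (?c - of_nat 1) * (?d * T) = (?d powr (?c - of_nat 1) * ?d) * (?c * T)"
      by (simp only: ac_simps)
    also have "\<dots> = ?d powr ?c * Hf A A' e u" by (simp only: e1 cT)
    finally show ?thesis .
  qed
  then show ?thesis using gd unfolding g_W_def by simp
qed



lemma bil1: "bilinear (\<lambda>x y. ((M::real^'n^'n) *v x) \<bullet> (N *v y))"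
  unfolding bilinear_def linear_iff
  by (simp add: matrix_vector_right_distrib inner_add_left inner_add_right matrix_vector_mult_scaleR)

lemma bil2: "linear (f::real^'n \<Rightarrow> real) \<Longrightarrow> linear (g::real^'n \<Rightarrow> real) \<Longrightarrow> bilinear (\<lambda>x y. f x * g y)"
  unfolding bilinear_def linear_iff
  by (simp add: algebra_simps)

lemma bil3: "(\<And>q. linear (f q::real^'n \<Rightarrow> real)) \<Longrightarrow> (\<And>q. linear (g q::real^'n \<Rightarrow> real)) \<Longrightarrow>
   bilinear (\<lambda>x y. \<Sum>q\<in>Q. f q x * g q y)"
  unfolding bilinear_def linear_iff
  by (simp add: algebra_simps sum.distrib sum_distrib_left)

lemma lin1: "linear (\<lambda>x. a \<bullet> ((M::real^'n^'n) *v x))"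
  unfolding linear_iff by (simp add: matrix_vector_right_distrib inner_add_right matrix_vector_mult_scaleR)

lemma lin2: "linear (\<lambda>x. ((M::real^'n^'n) *v x) \<bullet> a)"
  unfolding linear_iff by (simp add: matrix_vector_right_distrib inner_add_left matrix_vector_mult_scaleR)


lemma Hder:
  fixes A A' A'' R :: "real \<Rightarrow> real^'n^'n" and e :: "'p::finite \<Rightarrow> real^'n"
  assumes dA: "(A has_vector_derivative A' u) (at u)"
    and dA': "(A' has_vector_derivative A'' u) (at u)"
    and jac: "A'' u + R u ** A u = 0"
    and lag: "transpose (A' u) ** A u = transpose (A u) ** A' u"
    and inv: "invertible (A u)"
    and dpos: "det (gram_M A e u) > 0"
  defines "S \<equiv> Sf A A' u" and "X \<equiv> Xf A e u" and "G \<equiv> matrix_inv (gram_M A e u)"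
    and "M' \<equiv> ((\<chi> i j. -2 * ((Sf A A' u *v Xf A e u i) \<bullet> Xf A e u j)) :: real^'p^'p)"
  shows "(Hf A A' e has_real_derivative
     (1 / real CARD('p)) * (\<Sum>k\<in>UNIV. \<Sum>j\<in>UNIV.
        (- (G ** M' ** G)) $ j $ k * ((S *v X k) \<bullet> X j) +
        G $ j $ k * (((- R u - S ** S) *v X k + S *v (- (S *v X k))) \<bullet> X j + (S *v X k) \<bullet> (- (S *v X j)))))
     (at u)"
proof -
  have mM: "mder (gram_M A e) M' u" unfolding M'_def
    by (rule pointwise(3)[where A=A and A'=A' and A''=A'' and R=R and u=u and e=e, OF dA dA' jac lag inv])
  have invM: "invertible (gram_M A e u)" using dpos by (simp add: invertible_det_nz)
  have mG: "mder (\<lambda>v. matrix_inv (gram_M A e v)) (- (G ** M' ** G)) u"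
    unfolding G_def by (rule inv_der[OF mM invM])
  have mS: "mder (Sf A A') (- R u - S ** S) u" unfolding S_def
    by (rule pointwise(4)[where A=A and A'=A' and A''=A'' and R=R and u=u, OF dA dA' jac lag inv])
  have vX: "vder (\<lambda>v. Xf A e v i) (- (S *v X i)) u" for i unfolding S_def X_def
    by (rule pointwise(2)[where A=A and A'=A' and A''=A'' and R=R and u=u and e=e, OF dA dA' jac lag inv])
  have vSX: "vder (\<lambda>v. Sf A A' v *v Xf A e v k) ((- R u - S ** S) *v X k + S *v (- (S *v X k))) u" for k
    using vder_mv[OF mS vX[of k]] unfolding S_def X_def .
  have dI: "((\<lambda>v. (Sf A A' v *v Xf A e v k) \<bullet> Xf A e v j) has_real_derivative
      ((- R u - S ** S) *v X k + S *v (- (S *v X k))) \<bullet> X j + (S *v X k) \<bullet> (- (S *v X j))) (at u)" for k j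
    using der_inner[OF vSX[of k] vX[of j]] unfolding S_def X_def .
  have dG: "((\<lambda>v. matrix_inv (gram_M A e v) $ j $ k) has_real_derivative (- (G ** M' ** G)) $ j $ k) (at u)" for j k
    using mG unfolding mder_def by blast
  show ?thesis
    unfolding Hf_def
    apply (rule DERIV_cmult)
    apply (rule DERIV_sum)
    apply (rule DERIV_sum)
    using DERIV_mult'[OF dG dI] by (simp add: G_def S_def X_def add.commute)
qed



lemma S1_inner:
  assumes w: "orthonormal_fam w"
  shows "S1_op S w x \<bullet> w l = (S *v x) \<bullet> w l"
  unfolding S1_op_def using orth_sum_inner[OF w] by simp

lemma trS1_eq:
  assumes w: "orthonormal_fam w"
  shows "tr_S1 S w = (\<Sum>i\<in>UNIV. (S *v w i) \<bullet> w i)"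
  unfolding tr_S1_def using S1_inner[OF w] by simp

lemma trS1sq_eq:
  assumes w: "orthonormal_fam w"
  shows "tr_S1_sq S w = (\<Sum>i\<in>UNIV. \<Sum>j\<in>UNIV. ((S *v w i) \<bullet> w j) * ((S *v w j) \<bullet> w i))"
proof -
  have "S1_op S w (S1_op S w (w i)) \<bullet> w i = (\<Sum>j\<in>UNIV. ((S *v w i) \<bullet> w j) * ((S *v w j) \<bullet> w i))" for i
  proof -
    have lin: "linear ((*v) S)" by (rule matrix_vector_mul_linear)
    have "S1_op S w (S1_op S w (w i)) \<bullet> w i = (S *v S1_op S w (w i)) \<bullet> w i" by (rule S1_inner[OF w])
    also have "S *v S1_op S w (w i) = (\<Sum>j\<in>UNIV. ((S *v w i) \<bullet> w j) *\<^sub>R (S *v w j))"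
      unfolding S1_op_def by (simp add: linear_sum[OF lin] linear_scale[OF lin])
    finally show ?thesis by (simp add: inner_sum_left)
  qed
  then show ?thesis unfolding tr_S1_sq_def by simp
qed

lemma trS2_eq:
  assumes w: "orthonormal_fam w"
  shows "tr_S2T_S2 S w = (\<Sum>i\<in>UNIV. (S *v w i) \<bullet> (S *v w i)) - (\<Sum>i\<in>UNIV. \<Sum>j\<in>UNIV. ((S *v w i) \<bullet> w j) * ((S *v w i) \<bullet> w j))"
proof -
  have "S2_op S w (w i) \<bullet> S2_op S w (w i) = (S *v w i) \<bullet> (S *v w i) - (\<Sum>j\<in>UNIV. ((S *v w i) \<bullet> w j) * ((S *v w i) \<bullet> w j))" for i
  proof -
    let ?y = "S *v w i" and ?p = "S1_op S w (w i)"
    have pp: "?p \<bullet> w l = ?y \<bullet> w l" for l by (rule S1_inner[OF w])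
    have yp: "?y \<bullet> ?p = (\<Sum>j\<in>UNIV. (?y \<bullet> w j) * (?y \<bullet> w j))"
      unfolding S1_op_def by (simp add: inner_sum_right)
    have ppp: "?p \<bullet> ?p = (\<Sum>j\<in>UNIV. (?y \<bullet> w j) * (?y \<bullet> w j))"
    proof -
      have "?p \<bullet> ?p = (\<Sum>j\<in>UNIV. (?y \<bullet> w j) * (?p \<bullet> w j))"
        by (subst (2) S1_op_def) (simp add: inner_sum_right inner_commute)
      then show ?thesis using pp by simp
    qed
    have "S2_op S w (w i) \<bullet> S2_op S w (w i) = ?y \<bullet> ?y - 2 * (?y \<bullet> ?p) + ?p \<bullet> ?p"
      unfolding S2_op_def by (simp add: inner_diff_left inner_diff_right inner_commute)
    then show ?thesis using yp ppp by simp
  qed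
  then show ?thesis unfolding tr_S2T_S2_def by (simp add: sum_subtractf)
qed



lemma mv_diff: "((M::real^'n^'m) - N) *v x = M *v x - N *v x"
  by (simp add: vec_eq_iff matrix_vector_mult_def sum_subtractf algebra_simps)

lemma mv_rneg: "(M::real^'n^'m) *v (- x) = - (M *v x)"
  by (simp add: vec_eq_iff matrix_vector_mult_def sum_negf)

lemma lin3: "linear (\<lambda>x::real^'n. a \<bullet> x)"
  unfolding linear_iff by (simp add: inner_add_right)

lemma alg_a:
  fixes X w :: "'p::finite \<Rightarrow> real^'n" and S :: "real^'n^'n"
  assumes w: "orthonormal_fam w" and sp: "span (range w) = span (range X)"
    and inv: "invertible (gram X)"
  shows "(\<Sum>k\<in>UNIV. \<Sum>j\<in>UNIV. matrix_inv (gram X) $ j $ k * ((S *v X k) \<bullet> X j)) = tr_S1 S w"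
proof -
  have "(\<Sum>k\<in>UNIV. \<Sum>j\<in>UNIV. matrix_inv (gram X) $ j $ k * ((S *v X k) \<bullet> X j))
      = (\<Sum>j\<in>UNIV. \<Sum>k\<in>UNIV. matrix_inv (gram X) $ j $ k * ((mat 1 *v X j) \<bullet> (S *v X k)))"
    by (subst sum.swap) (simp add: inner_commute)
  also have "\<dots> = (\<Sum>q\<in>UNIV. (mat 1 *v w q) \<bullet> (S *v w q))"
    by (rule red[OF w sp inv bil1])
  also have "\<dots> = tr_S1 S w" by (simp add: trS1_eq[OF w] inner_commute)
  finally show ?thesis .
qed

lemma alg_b:
  fixes X w :: "'p::finite \<Rightarrow> real^'n" and S Rm :: "real^'n^'n"
  assumes w: "orthonormal_fam w" and sp: "span (range w) = span (range X)"
    and inv: "invertible (gram X)" and Ssym: "transpose S = S"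
  defines "G \<equiv> matrix_inv (gram X)"
    and "M' \<equiv> ((\<chi> i j. -2 * ((S *v X i) \<bullet> X j)) :: real^'p^'p)"
  shows "(\<Sum>k\<in>UNIV. \<Sum>j\<in>UNIV.
        (- (G ** M' ** G)) $ j $ k * ((S *v X k) \<bullet> X j) +
        G $ j $ k * (((- Rm - S ** S) *v X k + S *v (- (S *v X k))) \<bullet> X j + (S *v X k) \<bullet> (- (S *v X j))))
     = - tr_S1_sq S w - 3 * tr_S2T_S2 S w - (\<Sum>i\<in>UNIV. (Rm *v w i) \<bullet> w i)"
proof -
  have inner2: "((- Rm - S ** S) *v X k + S *v (- (S *v X k))) \<bullet> X j + (S *v X k) \<bullet> (- (S *v X j))
      = - ((mat 1 *v X j) \<bullet> (Rm *v X k)) - 3 * ((S *v X j) \<bullet> (S *v X k))" for j k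
  proof -
    have a: "(S *v (S *v X k)) \<bullet> X j = (S *v X j) \<bullet> (S *v X k)"
      using sym_inner[OF Ssym, of "S *v X k" "X j"] by (simp add: inner_commute)
    have a2: "((S ** S) *v X k) = S *v (S *v X k)" by (simp add: matrix_vector_mul_assoc)
    have b: "(S *v (- (S *v X k))) \<bullet> X j = - ((S *v X j) \<bullet> (S *v X k))"
      using sym_inner[OF Ssym, of "S *v X k" "X j"] by (simp add: mv_rneg inner_commute)
    have e1: "(- Rm - S ** S) *v X k = - (Rm *v X k) - S *v (S *v X k)"
      by (simp only: mv_diff mv_neg a2)
    have e2: "S *v (- (S *v X k)) = - (S *v (S *v X k))" by (rule mv_rneg)
    have "((- Rm - S ** S) *v X k + S *v (- (S *v X k))) \<bullet> X j + (S *v X k) \<bullet> (- (S *v X j))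
       = - ((Rm *v X k) \<bullet> X j) - (S *v (S *v X k)) \<bullet> X j - (S *v (S *v X k)) \<bullet> X j - (S *v X k) \<bullet> (S *v X j)"
      by (simp only: e1 e2 inner_add_left inner_diff_left inner_minus_left inner_minus_right)
    moreover have "(mat 1 *v X j) \<bullet> (Rm *v X k) = (Rm *v X k) \<bullet> X j" by (simp add: inner_commute)
    moreover have "(S *v X k) \<bullet> (S *v X j) = (S *v X j) \<bullet> (S *v X k)" by (simp add: inner_commute)
    ultimately show ?thesis using a by linarith
  qed
  have T2: "(\<Sum>k\<in>UNIV. \<Sum>j\<in>UNIV. G $ j $ k * (((- Rm - S ** S) *v X k + S *v (- (S *v X k))) \<bullet> X j + (S *v X k) \<bullet> (- (S *v X j))))
     = - (\<Sum>q\<in>UNIV. (Rm *v w q) \<bullet> w q) - 3 * (\<Sum>q\<in>UNIV. (S *v w q) \<bullet> (S *v w q))"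
  proof -
    have "(\<Sum>k\<in>UNIV. \<Sum>j\<in>UNIV. G $ j $ k * (((- Rm - S ** S) *v X k + S *v (- (S *v X k))) \<bullet> X j + (S *v X k) \<bullet> (- (S *v X j))))
       = - (\<Sum>j\<in>UNIV. \<Sum>k\<in>UNIV. G $ j $ k * ((mat 1 *v X j) \<bullet> (Rm *v X k)))
         - 3 * (\<Sum>j\<in>UNIV. \<Sum>k\<in>UNIV. G $ j $ k * ((S *v X j) \<bullet> (S *v X k)))"
      unfolding inner2
      by (subst sum.swap) (simp add: algebra_simps sum_subtractf sum.distrib sum_distrib_left sum_negf)
    also have "\<dots> = - (\<Sum>q\<in>UNIV. (mat 1 *v w q) \<bullet> (Rm *v w q)) - 3 * (\<Sum>q\<in>UNIV. (S *v w q) \<bullet> (S *v w q))"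
      unfolding G_def red[OF w sp inv bil1] ..
    finally show ?thesis by (simp add: inner_commute)
  qed
  define d where "d a b = (S *v X a) \<bullet> X b" for a b
  define c where "c k j = (S *v X k) \<bullet> X j" for k j
  have entry: "(- (G ** M' ** G)) $ j $ k * c k j = (\<Sum>b\<in>UNIV. \<Sum>a\<in>UNIV. 2 * (G $ j $ a * G $ b $ k * d a b * c k j))" for j k
    by (simp add: matrix_matrix_mult_def M'_def d_def sum_distrib_right sum_distrib_left sum_negf[symmetric] algebra_simps)
  have T1: "(\<Sum>k\<in>UNIV. \<Sum>j\<in>UNIV. (- (G ** M' ** G)) $ j $ k * ((S *v X k) \<bullet> X j)) = 2 * tr_S1_sq S w"
  proof -
    let ?F = "\<lambda>j a b k. 2 * (G $ j $ a * G $ b $ k * d a b * c k j)"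
    have "(\<Sum>k\<in>UNIV. \<Sum>j\<in>UNIV. (- (G ** M' ** G)) $ j $ k * ((S *v X k) \<bullet> X j))
        = (\<Sum>k\<in>UNIV. \<Sum>j\<in>UNIV. \<Sum>b\<in>UNIV. \<Sum>a\<in>UNIV. ?F j a b k)"
      using entry unfolding c_def by simp
    also have "\<dots> = (\<Sum>j\<in>UNIV. \<Sum>k\<in>UNIV. \<Sum>b\<in>UNIV. \<Sum>a\<in>UNIV. ?F j a b k)"
      by (rule sum.swap)
    also have "\<dots> = (\<Sum>j\<in>UNIV. \<Sum>b\<in>UNIV. \<Sum>k\<in>UNIV. \<Sum>a\<in>UNIV. ?F j a b k)"
      by (rule sum.cong[OF refl], rule sum.swap)
    also have "\<dots> = (\<Sum>j\<in>UNIV. \<Sum>b\<in>UNIV. \<Sum>a\<in>UNIV. \<Sum>k\<in>UNIV. ?F j a b k)"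
      by (rule sum.cong[OF refl], rule sum.cong[OF refl], rule sum.swap)
    also have "\<dots> = (\<Sum>j\<in>UNIV. \<Sum>a\<in>UNIV. \<Sum>b\<in>UNIV. \<Sum>k\<in>UNIV. ?F j a b k)"
      by (rule sum.cong[OF refl], rule sum.swap)
    also have "\<dots> = 2 * (\<Sum>j\<in>UNIV. \<Sum>a\<in>UNIV. G $ j $ a * (\<Sum>b\<in>UNIV. \<Sum>k\<in>UNIV. G $ b $ k *
          (((S *v X a) \<bullet> X b) * ((S *v X k) \<bullet> X j))))"
      by (simp add: sum_distrib_left d_def c_def algebra_simps)
    also have "\<dots> = 2 * (\<Sum>j\<in>UNIV. \<Sum>a\<in>UNIV. G $ j $ a * (\<Sum>q\<in>UNIV.
          (((S *v X a) \<bullet> w q) * ((S *v w q) \<bullet> X j))))"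
      unfolding G_def
      by (subst red[OF w sp inv bil2[OF lin3 lin2]]) (rule refl)
    also have "\<dots> = 2 * (\<Sum>j\<in>UNIV. \<Sum>a\<in>UNIV. G $ j $ a * (\<Sum>q\<in>UNIV.
          ((S *v w q) \<bullet> X j) * ((S *v X a) \<bullet> w q)))"
      by (simp add: mult.commute)
    also have "\<dots> = 2 * (\<Sum>r\<in>UNIV. \<Sum>q\<in>UNIV. ((S *v w q) \<bullet> w r) * ((S *v w r) \<bullet> w q))"
      unfolding G_def
      by (subst red[OF w sp inv bil3[OF lin3 lin2]]) (rule refl)
    also have "\<dots> = 2 * tr_S1_sq S w"
      by (simp add: trS1sq_eq[OF w] mult.commute)
    finally show ?thesis .
  qed
  have "(\<Sum>k\<in>UNIV. \<Sum>j\<in>UNIV.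
        (- (G ** M' ** G)) $ j $ k * ((S *v X k) \<bullet> X j) +
        G $ j $ k * (((- Rm - S ** S) *v X k + S *v (- (S *v X k))) \<bullet> X j + (S *v X k) \<bullet> (- (S *v X j))))
     = 2 * tr_S1_sq S w - (\<Sum>q\<in>UNIV. (Rm *v w q) \<bullet> w q) - 3 * (\<Sum>q\<in>UNIV. (S *v w q) \<bullet> (S *v w q))"
    unfolding sum.distrib T1 T2 by simp
  moreover have "tr_S2T_S2 S w = (\<Sum>q\<in>UNIV. (S *v w q) \<bullet> (S *v w q)) - tr_S1_sq S w"
  proof -
    have symw: "(S *v w j) \<bullet> w i = (S *v w i) \<bullet> w j" for i j
      using sym_inner[OF Ssym, of "w j" "w i"] by (simp add: inner_commute)
    show ?thesis unfolding trS2_eq[OF w] trS1sq_eq[OF w] by (simp add: symw)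
  qed
  ultimately show ?thesis by simp
qed



lemma ev_pos:
  fixes f :: "real \<Rightarrow> real"
  assumes "(f has_real_derivative D) (at s)" "f s > 0"
  shows "eventually (\<lambda>u. f u > 0) (nhds s)"
proof -
  have "isCont f s" using assms(1) by (rule DERIV_isCont)
  then have "(f \<longlongrightarrow> f s) (at s)" by (simp add: isCont_def)
  then have "eventually (\<lambda>u. 0 < f u) (at s)" using assms(2) by (rule order_tendstoD(1))
  then show ?thesis using assms(2) by (simp add: eventually_nhds_conv_at)
qed

theorem proposition2p1:
  fixes I :: "real set" and t0 t :: real
    and R A A' A'' :: "real \<Rightarrow> real^'n^'n"
    and e :: "'p::finite \<Rightarrow> real^'n"
  assumes I: "open I" "is_interval I" "t0 \<in> I"
    and R_cont: "continuous_on I R"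
    and R_sym: "\<forall>s\<in>I. transpose (R s) = R s"
    and dA: "\<forall>s\<in>I. (A has_vector_derivative A' s) (at s)"
    and dA': "\<forall>s\<in>I. (A' has_vector_derivative A'' s) (at s)"
    and jacobi: "\<forall>s\<in>I. A'' s + R s ** A s = 0"
    and ker: "\<forall>v. A t0 *v v = 0 \<and> A' t0 *v v = 0 \<longrightarrow> v = 0"
    and lagr: "\<forall>s\<in>I. transpose (A' s) ** A s = transpose (A s) ** A' s"
    and e_on: "orthonormal_fam e"
    and t_reg: "t \<in> I" "invertible (A t)"
  shows "\<exists>g2. (deriv (g_W A e) has_real_derivative g2) (at t) \<and>
    (\<forall>w :: 'p \<Rightarrow> real^'n. orthonormal_fam w \<and>
        span (range w) = span (range (\<lambda>i. inv_adj (A t) *v e i)) \<longrightarrow>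
      real CARD('p) * (g2 / g_W A e t)
        = (1 / real CARD('p)) * (tr_S1 (A' t ** matrix_inv (A t)) w)\<^sup>2
          - tr_S1_sq (A' t ** matrix_inv (A t)) w
          - 3 * tr_S2T_S2 (A' t ** matrix_inv (A t)) w
          - (\<Sum>i\<in>UNIV. (R t *v w i) \<bullet> w i))"
proof -
  let ?P = "real CARD('p)"
  have Binv: "invertible (inv_adj (A t))"
    unfolding inv_adj_def invertible_def
    using matrix_inv_both[OF transpose_invertible[OF t_reg(2)]] by blast
  have li: "\<And>c::real^'p. (\<Sum>i\<in>UNIV. c$i *\<^sub>R Xf A e t i) = 0 \<Longrightarrow> c = 0"
    unfolding Xf_def by (rule li_Be[OF Binv e_on])
  have dpos_t: "det (gram_M A e t) > 0" and invG: "invertible (gram (Xf A e t))"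
    using gram_pos[of "Xf A e t", OF li] by (auto simp: gram_M_eq)
  have ev1: "eventually (\<lambda>u. u \<in> I) (nhds t)" using I(1) t_reg(1) by (rule eventually_nhds_in_open)
  have ev2: "eventually (\<lambda>u. det (A u) \<noteq> 0) (nhds t)"
    using ev_nonzero[OF det_der_gen[OF mder_of_hvd[OF dA[rule_format, OF t_reg(1)]]]] t_reg(2)
    by (simp add: invertible_det_nz)
  have mMt: "mder (gram_M A e) (\<chi> i j. -2 * ((Sf A A' t *v Xf A e t i) \<bullet> Xf A e t j)) t"
    by (rule pointwise(3)[where A=A and A'=A' and A''=A'' and R=R and u=t and e=e,
          OF dA[rule_format, OF t_reg(1)] dA'[rule_format, OF t_reg(1)] jacobi[rule_format, OF t_reg(1)]
             lagr[rule_format, OF t_reg(1)] t_reg(2)])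
  have ev3: "eventually (\<lambda>u. det (gram_M A e u) > 0) (nhds t)"
    using ev_pos[OF det_der_gen[OF mMt] dpos_t] .
  have evd: "eventually (\<lambda>u. deriv (g_W A e) u = g_W A e u * Hf A A' e u) (nhds t)"
    using ev1 ev2 ev3
  proof eventually_elim
    case (elim u)
    have "(g_W A e has_real_derivative g_W A e u * Hf A A' e u) (at u)"
      by (rule gder[where A''=A'' and R=R, OF dA[rule_format, OF elim(1)] dA'[rule_format, OF elim(1)]
            jacobi[rule_format, OF elim(1)] lagr[rule_format, OF elim(1)] _ elim(3)])
         (use elim(2) in \<open>simp add: invertible_det_nz\<close>)
    then show ?case by (rule DERIV_imp_deriv)
  qed
  let ?S = "Sf A A' t" and ?X = "Xf A e t" and ?G = "matrix_inv (gram_M A e t)"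
  let ?M' = "((\<chi> i j. -2 * ((Sf A A' t *v Xf A e t i) \<bullet> Xf A e t j)) :: real^'p^'p)"
  define HD where "HD = (1 / ?P) * (\<Sum>k\<in>UNIV. \<Sum>j\<in>UNIV.
        (- (?G ** ?M' ** ?G)) $ j $ k * ((?S *v ?X k) \<bullet> ?X j) +
        ?G $ j $ k * (((- R t - ?S ** ?S) *v ?X k + ?S *v (- (?S *v ?X k))) \<bullet> ?X j + (?S *v ?X k) \<bullet> (- (?S *v ?X j))))"
  have gd: "(g_W A e has_real_derivative g_W A e t * Hf A A' e t) (at t)"
    by (rule gder[where A''=A'' and R=R, OF dA[rule_format, OF t_reg(1)] dA'[rule_format, OF t_reg(1)]
            jacobi[rule_format, OF t_reg(1)] lagr[rule_format, OF t_reg(1)] t_reg(2) dpos_t])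
  have hd: "(Hf A A' e has_real_derivative HD) (at t)"
    unfolding HD_def
    by (rule Hder[where A''=A'' and R=R, OF dA[rule_format, OF t_reg(1)] dA'[rule_format, OF t_reg(1)]
            jacobi[rule_format, OF t_reg(1)] lagr[rule_format, OF t_reg(1)] t_reg(2) dpos_t])
  define g2 where "g2 = g_W A e t * HD + g_W A e t * Hf A A' e t * Hf A A' e t"
  have prod: "((\<lambda>u. g_W A e u * Hf A A' e u) has_real_derivative g2) (at t)"
    unfolding g2_def using DERIV_mult'[OF gd hd] .
  have der2: "(deriv (g_W A e) has_real_derivative g2) (at t)"
    using evd prod by (subst DERIV_cong_ev[OF refl _ refl]) auto
  have gpos: "g_W A e t > 0" unfolding g_W_def using dpos_t by simp
  have Ssym: "transpose ?S = ?S"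
    by (rule pointwise(1)[where A=A and A'=A' and A''=A'' and R=R and u=t,
          OF dA[rule_format, OF t_reg(1)] dA'[rule_format, OF t_reg(1)] jacobi[rule_format, OF t_reg(1)]
             lagr[rule_format, OF t_reg(1)] t_reg(2)])
  show ?thesis
  proof (intro exI conjI allI impI)
    show "(deriv (g_W A e) has_real_derivative g2) (at t)" by (rule der2)
    fix w :: "'p \<Rightarrow> real^'n"
    assume wa: "orthonormal_fam w \<and> span (range w) = span (range (\<lambda>i. inv_adj (A t) *v e i))"
    have w: "orthonormal_fam w" using wa by blast
    have sp: "span (range w) = span (range ?X)"
      using wa by (simp add: Xf_def[abs_def])
    have GG: "?G = matrix_inv (gram ?X)" by (simp add: gram_M_eq)
    have Ht: "Hf A A' e t = (1 / ?P) * tr_S1 ?S w"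
      unfolding Hf_def GG alg_a[OF w sp invG] ..
    have HDv: "HD = (1 / ?P) * (- tr_S1_sq ?S w - 3 * tr_S2T_S2 ?S w - (\<Sum>i\<in>UNIV. (R t *v w i) \<bullet> w i))"
      unfolding HD_def GG alg_b[OF w sp invG Ssym] ..
    have "g2 / g_W A e t = HD + Hf A A' e t * Hf A A' e t"
      unfolding g2_def using gpos by (simp add: field_simps)
    then have "?P * (g2 / g_W A e t) = ?P * HD + ?P * (Hf A A' e t * Hf A A' e t)"
      by (simp add: algebra_simps)
    also have "\<dots> = (1 / ?P) * (tr_S1 ?S w)\<^sup>2 - tr_S1_sq ?S w - 3 * tr_S2T_S2 ?S w - (\<Sum>i\<in>UNIV. (R t *v w i) \<bullet> w i)"
      unfolding HDv Ht by (simp add: field_simps power2_eq_square)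
    finally show "?P * (g2 / g_W A e t) = (1 / ?P) * (tr_S1 (A' t ** matrix_inv (A t)) w)\<^sup>2
          - tr_S1_sq (A' t ** matrix_inv (A t)) w
          - 3 * tr_S2T_S2 (A' t ** matrix_inv (A t)) w
          - (\<Sum>i\<in>UNIV. (R t *v w i) \<bullet> w i)"
      by (simp add: Sf_def)
  qed
qed


end
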